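(* Let $(\mathcal M,X,\bot)$ be a concurrent system. (1) If $\alpha\in X$ satisfies $\mathcal M_\alpha\ne\{\varepsilon\}$, then every pair $(\alpha,c)$ with $c$ a maximal element (for inclusion) of $\mathfrak C_\alpha$ is a positive node of the DSC. (2) If $((\alpha,c),(\alpha',c'))$ is an arc of the DSC and $(\alpha',c')$ is positive, then $(\alpha,c)$ is positive. (3) For every $\alpha\in X$ and every $x\in\mathcal M_\alpha$ there exists $y\in\mathcal M_{\alpha\cdot x}$ such that $xy$ has the same height as $x$ and all nodes of the DSC path corresponding to $xy$ are positive. (4) If $(\alpha,c)$ is a null node, then for every $x\in\mathcal M_\alpha$ with $C_1(x)=c$ there exists a letter $a\in\Sigma$ such that $x\in\mathcal M^a$, i.e. $x$ has no occurrence of $a$.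
   Context: A trace monoid $\mathcal M=\mathcal M(\Sigma,I)$ is $\langle\Sigma\mid ab=ba\ ((a,b)\in I)\rangle$, $\Sigma$ finite, $I$ irreflexive symmetric; $\varepsilon$ is the unit; for $a\in\Sigma$, $\mathcal M^a=\langle\Sigma\setminus\{a\}\rangle$. A clique is a trace of pairwise distinct letters pairwise in $I$; $\mathfrak C$ is the set of nonempty cliques; for $c,c'\in\mathfrak C$, $c\to c'$ means every letter of $c'$ is in relation $(\Sigma\times\Sigma)\setminus I$ with some letter of $c$. Each nonempty trace $x$ has a unique normal form $x=c_1\cdots c_h$, $c_i\in\mathfrak C$, $c_i\to c_{i+1}$; $h$ is the height of $x$ (height of $\varepsilon$ is $0$) and $C_1(x)=c_1$. A concurrent system $(\mathcal M,X,\bot)$: $X$ finite, $\bot\notin X$, right action of $\mathcal M$ on $X\cup\{\bot\}$ with $\bot\cdot x=\bot$; $\mathcal M_\alpha=\{x:\alpha\cdot x\ne\bot\}$, $\mathfrak C_\alpha=\mathfrak C\cap\mathcal M_\alpha$. DSC: nodes $(\alpha,c)$, $c\in\mathfrak C_\alpha$, arc $(\alpha,c)\to(\beta,d)$ iff $\beta=\alpha\cdot c$ and $c\to d$. The DSC path corresponding to $x\in\mathcal M_\alpha\setminus\{\varepsilon\}$ with normal form $c_1\cdots c_h$ is $((\alpha_0,c_1),\dots,(\alpha_{h-1},c_h))$, $\alpha_0=\alpha$, $\alpha_{i}=\alpha_{i-1}\cdot c_{i}$. A node $(\alpha,c)$ is positive if there exists $x\in\mathcal M_\alpha$ with $C_1(xy)=c$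 for all $y\in\mathcal M_{\alpha\cdot x}$; it is null otherwise. *)

theory Defs
  imports Main
begin

text \<open>Trace monoid M(Sg, I): traces are represented by words over Sg
  modulo the congruence generated by commuting adjacent independent letters.\<close>

definition indep_rel :: "'a set \<Rightarrow> ('a \<times> 'a) set \<Rightarrow> bool" where
  "indep_rel Sg I \<longleftrightarrow> I \<subseteq> Sg \<times> Sg \<and> irrefl I \<and> sym I"

definition swap1 :: "('a \<times> 'a) set \<Rightarrow> 'a list \<Rightarrow> 'a list \<Rightarrow> bool" where
  "swap1 I u v \<longleftrightarrow> (\<exists>p q a b. (a, b) \<in> I \<and> u = p @ [a, b] @ q \<and> v = p @ [b, a] @ q)"

definition teq :: "('a \<times> 'a) set \<Rightarrow> 'a list \<Rightarrow> 'a list \<Rightarrow> bool" where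
  "teq I = (swap1 I)\<^sup>*\<^sup>*"

definition is_clique :: "'a set \<Rightarrow> ('a \<times> 'a) set \<Rightarrow> 'a set \<Rightarrow> bool" where
  "is_clique Sg I c \<longleftrightarrow> c \<noteq> {} \<and> c \<subseteq> Sg \<and> (\<forall>a\<in>c. \<forall>b\<in>c. a \<noteq> b \<longrightarrow> (a, b) \<in> I)"

text \<open>A word representing the clique c as a trace (any enumeration; all are trace-equivalent).\<close>
definition cword :: "'a set \<Rightarrow> 'a list" where
  "cword c = (SOME w. distinct w \<and> set w = c)"

definition arrow :: "('a \<times> 'a) set \<Rightarrow> 'a set \<Rightarrow> 'a set \<Rightarrow> bool" where
  "arrow I c d \<longleftrightarrow> (\<forall>b\<in>d. \<exists>a\<in>c. (a, b) \<notin> I)"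

definition is_nf :: "'a set \<Rightarrow> ('a \<times> 'a) set \<Rightarrow> 'a set list \<Rightarrow> 'a list \<Rightarrow> bool" where
  "is_nf Sg I cs w \<longleftrightarrow> (\<forall>c\<in>set cs. is_clique Sg I c) \<and> successively (arrow I) cs
     \<and> teq I (concat (map cword cs)) w"

text \<open>The (unique) normal form c_1 ... c_h of a trace; height = h, C_1 = first clique.\<close>
definition nf :: "'a set \<Rightarrow> ('a \<times> 'a) set \<Rightarrow> 'a list \<Rightarrow> 'a set list" where
  "nf Sg I w = (THE cs. is_nf Sg I cs w)"

definition height :: "'a set \<Rightarrow> ('a \<times> 'a) set \<Rightarrow> 'a list \<Rightarrow> nat" where
  "height Sg I w = length (nf Sg I w)"

text \<open>Right action on X \<union> {\<bottom>}, with \<bottom> = None, generated by the letter action delta.\<close>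
fun act :: "('s \<Rightarrow> 'a \<Rightarrow> 's option) \<Rightarrow> 's option \<Rightarrow> 'a list \<Rightarrow> 's option" where
  "act delta s [] = s"
| "act delta None (a # w) = None"
| "act delta (Some s) (a # w) = act delta (delta s a) w"

definition conc_system :: "'a set \<Rightarrow> ('a \<times> 'a) set \<Rightarrow> 's set \<Rightarrow> ('s \<Rightarrow> 'a \<Rightarrow> 's option) \<Rightarrow> bool" where
  "conc_system Sg I X delta \<longleftrightarrow> finite Sg \<and> indep_rel Sg I \<and> finite X
     \<and> (\<forall>s\<in>X. \<forall>a\<in>Sg. delta s a = None \<or> the (delta s a) \<in> X)
     \<and> (\<forall>s\<in>X. \<forall>(a, b)\<in>I. act delta (Some s) [a, b] = act delta (Some s) [b, a])"

text \<open>M_alpha (as a set of words; it is closed under trace equivalence).\<close>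
definition Mst :: "'a set \<Rightarrow> ('s \<Rightarrow> 'a \<Rightarrow> 's option) \<Rightarrow> 's option \<Rightarrow> 'a list set" where
  "Mst Sg delta s = {w. set w \<subseteq> Sg \<and> act delta s w \<noteq> None}"

definition cliques_at :: "'a set \<Rightarrow> ('a \<times> 'a) set \<Rightarrow> ('s \<Rightarrow> 'a \<Rightarrow> 's option) \<Rightarrow> 's \<Rightarrow> 'a set set" where
  "cliques_at Sg I delta \<alpha> = {c. is_clique Sg I c \<and> act delta (Some \<alpha>) (cword c) \<noteq> None}"

definition dsc_node :: "'a set \<Rightarrow> ('a \<times> 'a) set \<Rightarrow> ('s \<Rightarrow> 'a \<Rightarrow> 's option) \<Rightarrow> 's \<Rightarrow> 'a set \<Rightarrow> bool" where
  "dsc_node Sg I delta \<alpha> c \<longleftrightarrow> c \<in> cliques_at Sg I delta \<alpha>"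

definition dsc_arc :: "'a set \<Rightarrow> ('a \<times> 'a) set \<Rightarrow> ('s \<Rightarrow> 'a \<Rightarrow> 's option) \<Rightarrow> 's \<Rightarrow> 'a set \<Rightarrow> 's \<Rightarrow> 'a set \<Rightarrow> bool" where
  "dsc_arc Sg I delta \<alpha> c \<beta> d \<longleftrightarrow> dsc_node Sg I delta \<alpha> c \<and> dsc_node Sg I delta \<beta> d
     \<and> act delta (Some \<alpha>) (cword c) = Some \<beta> \<and> arrow I c d"

definition positive_node :: "'a set \<Rightarrow> ('a \<times> 'a) set \<Rightarrow> ('s \<Rightarrow> 'a \<Rightarrow> 's option) \<Rightarrow> 's \<Rightarrow> 'a set \<Rightarrow> bool" where
  "positive_node Sg I delta \<alpha> c \<longleftrightarrow> dsc_node Sg I delta \<alpha> c \<and>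
     (\<exists>x\<in>Mst Sg delta (Some \<alpha>). \<forall>y\<in>Mst Sg delta (act delta (Some \<alpha>) x).
        nf Sg I (x @ y) \<noteq> [] \<and> hd (nf Sg I (x @ y)) = c)"

definition null_node :: "'a set \<Rightarrow> ('a \<times> 'a) set \<Rightarrow> ('s \<Rightarrow> 'a \<Rightarrow> 's option) \<Rightarrow> 's \<Rightarrow> 'a set \<Rightarrow> bool" where
  "null_node Sg I delta \<alpha> c \<longleftrightarrow> dsc_node Sg I delta \<alpha> c \<and> \<not> positive_node Sg I delta \<alpha> c"

end

theory Submission
  imports Defs
begin


lemma act_None[simp]: "act d None w = None"
  by (cases w) auto

lemma act_append: "act d s (u @ v) = act d (act d s u) v"
proof (induction u arbitrary: s)
  case Nil then show ?case by simp
next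
  case (Cons a u) then show ?case by (cases s) auto
qed

lemma teq_refl[simp]: "teq I u u" by (simp add: teq_def)

lemma teq_trans: "teq I u v \<Longrightarrow> teq I v w \<Longrightarrow> teq I u w"
  unfolding teq_def by (rule rtranclp_trans)

lemma swap1_cong: "swap1 I u v \<Longrightarrow> swap1 I (p @ u @ q) (p @ v @ q)"
  unfolding swap1_def by (metis append.assoc)

lemma teq_cong: "teq I u v \<Longrightarrow> teq I (p @ u @ q) (p @ v @ q)"
  unfolding teq_def
proof (induction rule: rtranclp_induct)
  case base then show ?case by simp
next
  case (step y z) show ?case
    by (rule rtranclp.rtrancl_into_rtrancl[OF step.IH swap1_cong[OF step.hyps(2)]])
qed

lemma teq_congL: "teq I u v \<Longrightarrow> teq I (p @ u) (p @ v)"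
  using teq_cong[of I u v p "[]"] by simp
lemma teq_congR: "teq I u v \<Longrightarrow> teq I (u @ q) (v @ q)"
  using teq_cong[of I u v "[]" q] by simp

lemma teq_swap: "(a, b) \<in> I \<Longrightarrow> teq I (a # b # q) (b # a # q)"
  unfolding teq_def swap1_def
  by (intro r_into_rtranclp exI[of _ "[]"] exI[of _ q]) auto

lemma swap1_sym: assumes "sym I" "swap1 I u v" shows "swap1 I v u"
proof -
  obtain p q a b where "(a, b) \<in> I" "u = p @ [a, b] @ q" "v = p @ [b, a] @ q"
    using assms(2) unfolding swap1_def by blast
  moreover have "(b, a) \<in> I" using \<open>(a, b) \<in> I\<close> assms(1) by (simp add: sym_def)
  ultimately show ?thesis unfolding swap1_def by blast
qed

lemma teq_sym: assumes "sym I" shows "teq I u v \<Longrightarrow> teq I v u"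
  unfolding teq_def
proof (induction rule: rtranclp_induct)
  case base then show ?case by simp
next
  case (step y z) show ?case
    by (rule converse_rtranclp_into_rtranclp[OF swap1_sym[OF assms step.hyps(2)] step.IH])
qed

lemma teq_set: "teq I u v \<Longrightarrow> set u = set v"
  unfolding teq_def
proof (induction rule: rtranclp_induct)
  case base then show ?case by simp
next
  case (step y z)
  then obtain p q a b where "y = p @ [a, b] @ q" "z = p @ [b, a] @ q"
    unfolding swap1_def by blast
  then show ?case using step.IH by auto
qed

lemma teq_length: "teq I u v \<Longrightarrow> length u = length v"
  unfolding teq_def
proof (induction rule: rtranclp_induct)
  case base then show ?case by simp
next
  case (step y z)
  then obtain p q a b where "y = p @ [a, b] @ q" "z = p @ [b, a] @ q"
    unfolding swap1_def by blast
  then show ?case using step.IH by auto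
qed

lemma teq_move: "\<forall>y\<in>set R. (y, a) \<in> I \<Longrightarrow> teq I (R @ [a]) (a # R)"
proof (induction R)
  case Nil then show ?case by simp
next
  case (Cons b R)
  have "teq I (b # R @ [a]) (b # a # R)"
    using teq_congL[of I "R @ [a]" "a # R" "[b]"] Cons by simp
  moreover have "teq I (b # a # R) (a # b # R)" using Cons.prems by (simp add: teq_swap)
  ultimately show ?case by (simp add: teq_trans)
qed

lemma teq_perm:
  assumes "sym I" "distinct u" "distinct v" "set u = set v"
    "\<forall>x\<in>set u. \<forall>y\<in>set u. x \<noteq> y \<longrightarrow> (x, y) \<in> I"
  shows "teq I u v"
  using assms(2-)
proof (induction u arbitrary: v)
  case Nil then show ?case by simp
next
  case (Cons x u)
  then have "x \<in> set v" by auto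
  then obtain v1 v2 where v: "v = v1 @ x # v2" by (meson split_list)
  have "teq I (x # v1 @ v2) (v1 @ [x] @ v2)"
  proof -
    have "\<forall>y\<in>set v1. (y, x) \<in> I" using Cons.prems v assms(1)
      by (auto simp: sym_def)
    then have "teq I (v1 @ [x]) (x # v1)" by (rule teq_move)
    then have "teq I (x # v1) (v1 @ [x])" using assms(1) teq_sym by blast
    then show ?thesis using teq_congR[of I "x # v1" "v1 @ [x]" v2] by simp
  qed
  moreover have "set u = set (v1 @ v2)" using Cons.prems v by auto
  then have "teq I u (v1 @ v2)"
    using Cons.prems v by (intro Cons.IH) auto
  then have "teq I (x # u) (x # v1 @ v2)" using teq_congL[of I u "v1 @ v2" "[x]"] by simp
  ultimately show ?case using v teq_trans by (metis append_Cons append_Nil)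
qed

lemma cword: "finite c \<Longrightarrow> distinct (cword c) \<and> set (cword c) = c"
  unfolding cword_def by (rule someI_ex) (metis finite_distinct_list)

lemma cword_single[simp]: "cword {a} = [a]"
proof -
  have "distinct (cword {a}) \<and> set (cword {a}) = {a}" by (rule cword) simp
  then show ?thesis
    by (cases "cword {a}") (auto simp: subset_singleton_iff)
qed



definition dep :: "('a \<times> 'a) set \<Rightarrow> 'a \<Rightarrow> 'a set \<Rightarrow> bool" where
  "dep I a c \<longleftrightarrow> (\<exists>b\<in>c. (b, a) \<notin> I)"

definition ext :: "'a set list \<Rightarrow> nat \<Rightarrow> 'a set" where
  "ext cs i = (if i < length cs then cs ! i else {})"

definition kpos :: "('a \<times> 'a) set \<Rightarrow> 'a set list \<Rightarrow> 'a \<Rightarrow> nat" where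
  "kpos I cs a = Max (insert 0 (Suc ` {i. dep I a (ext cs i)}))"

definition ins :: "('a \<times> 'a) set \<Rightarrow> 'a set list \<Rightarrow> 'a \<Rightarrow> 'a set list" where
  "ins I cs a = (if kpos I cs a < length cs then cs[kpos I cs a := insert a (cs ! kpos I cs a)]
                 else cs @ [{a}])"

definition H :: "('a \<times> 'a) set \<Rightarrow> 'a list \<Rightarrow> 'a set list" where
  "H I w = foldl (ins I) [] w"

lemma dep_empty[simp]: "\<not> dep I a {}" by (simp add: dep_def)

lemma dep_fin: "{i. dep I a (ext cs i)} \<subseteq> {..<length cs}"
proof
  fix i assume "i \<in> {i. dep I a (ext cs i)}"
  then have "dep I a (ext cs i)" by simp
  then have "i < length cs" by (cases "i < length cs") (simp_all add: ext_def)
  then show "i \<in> {..<length cs}" by simp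
qed

lemma dep_finite: "finite (insert 0 (Suc ` {i. dep I a (ext cs i)}))"
  by (rule finite.insertI, rule finite_imageI, rule finite_subset[OF dep_fin finite_lessThan])

lemma kpos_le: "kpos I cs a \<le> length cs"
  unfolding kpos_def
proof (rule iffD2[OF Max_le_iff[OF dep_finite]])
  show "insert 0 (Suc ` {i. dep I a (ext cs i)}) \<noteq> {}" by simp
  show "\<forall>x\<in>insert 0 (Suc ` {i. dep I a (ext cs i)}). x \<le> length cs"
    using dep_fin by force
qed

lemma kpos_above: "kpos I cs a \<le> i \<Longrightarrow> \<not> dep I a (ext cs i)"
proof
  assume "kpos I cs a \<le> i" "dep I a (ext cs i)"
  then have "Suc i \<in> insert 0 (Suc ` {i. dep I a (ext cs i)})" by simp
  then have "Suc i \<le> kpos I cs a" unfolding kpos_def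
    by (rule Max_ge[OF dep_finite])
  then show False using \<open>kpos I cs a \<le> i\<close> by simp
qed

lemma kpos_below: "0 < kpos I cs a \<Longrightarrow> dep I a (ext cs (kpos I cs a - 1))"
proof -
  assume "0 < kpos I cs a"
  have "kpos I cs a \<in> insert 0 (Suc ` {i. dep I a (ext cs i)})"
    unfolding kpos_def by (rule Max_in[OF dep_finite]) simp
  then obtain j where "kpos I cs a = Suc j" "dep I a (ext cs j)"
    using \<open>0 < kpos I cs a\<close> by auto
  then show ?thesis by simp
qed

lemma kpos_eqI:
  assumes "\<And>i. k \<le> i \<Longrightarrow> \<not> dep I a (ext cs i)" "0 < k \<Longrightarrow> dep I a (ext cs (k - 1))"
  shows "kpos I cs a = k"
proof -
  have "\<not> kpos I cs a < k"
  proof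
    assume "kpos I cs a < k"
    then have "kpos I cs a \<le> k - 1" by simp
    then show False using kpos_above assms(2) \<open>kpos I cs a < k\<close> by fastforce
  qed
  moreover have "\<not> k < kpos I cs a"
  proof
    assume "k < kpos I cs a"
    then have "k \<le> kpos I cs a - 1" "0 < kpos I cs a" by auto
    then show False using kpos_below[of I cs a] assms(1)[of "kpos I cs a - 1"] by blast
  qed
  ultimately show ?thesis by simp
qed

lemma kpos_cong: "(\<And>i. dep I a (ext cs i) = dep I a (ext ds i)) \<Longrightarrow> kpos I cs a = kpos I ds a"
  unfolding kpos_def by simp

lemma length_ins: "length (ins I cs a) = max (length cs) (Suc (kpos I cs a))"
  using kpos_le[of I cs a] by (auto simp: ins_def)

lemma ext_ins: "ext (ins I cs a) i = (if i = kpos I cs a then insert a (ext cs i) else ext cs i)"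
  using kpos_le[of I cs a]
  by (auto simp: ins_def ext_def nth_append)

lemma list_eq_ext: "length cs = length ds \<Longrightarrow> (\<And>i. ext cs i = ext ds i) \<Longrightarrow> cs = ds"
  by (metis ext_def nth_equalityI)

lemma dep_insert: "(a, b) \<in> I \<Longrightarrow> dep I b (insert a c) = dep I b c"
  by (auto simp: dep_def)

lemma kpos_ins: "(a, b) \<in> I \<Longrightarrow> kpos I (ins I cs a) b = kpos I cs b"
  by (rule kpos_cong) (simp add: ext_ins dep_insert)

lemma ins_comm:
  assumes "(a, b) \<in> I" "(b, a) \<in> I"
  shows "ins I (ins I cs a) b = ins I (ins I cs b) a"
proof (rule list_eq_ext)
  show "length (ins I (ins I cs a) b) = length (ins I (ins I cs b) a)"
    by (simp add: length_ins kpos_ins assms)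
  fix i show "ext (ins I (ins I cs a) b) i = ext (ins I (ins I cs b) a) i"
    by (auto simp: ext_ins kpos_ins assms)
qed

lemma H_append: "H I (u @ v) = foldl (ins I) (H I u) v"
  by (simp add: H_def)

lemma H_teq:
  assumes "sym I" shows "teq I u v \<Longrightarrow> H I u = H I v"
  unfolding teq_def
proof (induction rule: rtranclp_induct)
  case base then show ?case by simp
next
  case (step y z)
  then obtain p q a b where "(a, b) \<in> I" "y = p @ [a, b] @ q" "z = p @ [b, a] @ q"
    unfolding swap1_def by blast
  moreover have "(b, a) \<in> I" using \<open>(a, b) \<in> I\<close> assms by (simp add: sym_def)
  ultimately show ?case using step.IH by (simp add: H_append ins_comm)
qed



lemma successively_nth:
  "successively P xs \<longleftrightarrow> (\<forall>i. Suc i < length xs \<longrightarrow> P (xs ! i) (xs ! Suc i))"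
proof (induction xs rule: induct_list012)
  case 1 then show ?case by simp
next
  case (2 x) then show ?case by simp
next
  case (3 x y zs)
  have "(\<forall>i. Suc i < length (x # y # zs) \<longrightarrow> P ((x # y # zs) ! i) ((x # y # zs) ! Suc i))
     \<longleftrightarrow> P x y \<and> (\<forall>i. Suc i < length (y # zs) \<longrightarrow> P ((y # zs) ! i) ((y # zs) ! Suc i))"
    (is "?L \<longleftrightarrow> ?R")
  proof
    assume ?L then show ?R by force
  next
    assume R: ?R
    show ?L
    proof (intro allI impI)
      fix i assume "Suc i < length (x # y # zs)"
      then show "P ((x # y # zs) ! i) ((x # y # zs) ! Suc i)"
        using R by (cases i) auto
    qed
  qed
  then show ?case using 3 by simp
qed

lemma Union_ext: "\<Union>(set cs) = (\<Union>i. ext cs i)"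
proof (rule set_eqI)
  fix x show "x \<in> \<Union>(set cs) \<longleftrightarrow> x \<in> (\<Union>i. ext cs i)"
  proof
    assume "x \<in> \<Union>(set cs)"
    then obtain i where "i < length cs" "x \<in> cs ! i" by (auto simp: in_set_conv_nth)
    then show "x \<in> (\<Union>i. ext cs i)" by (auto simp: ext_def)
  next
    assume "x \<in> (\<Union>i. ext cs i)"
    then obtain i where "x \<in> ext cs i" by auto
    then have "i < length cs" "x \<in> cs ! i" by (auto simp: ext_def split: if_splits)
    then show "x \<in> \<Union>(set cs)" using nth_mem by blast
  qed
qed

lemma Union_ins: "\<Union>(set (ins I cs a)) = insert a (\<Union>(set cs))"
  unfolding Union_ext ext_ins by (auto split: if_splits) metis

lemma Union_H: "\<Union>(set (H I w)) = set w"
proof (induction w rule: rev_induct)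
  case Nil then show ?case by (simp add: H_def)
next
  case (snoc a w) then show ?case by (simp add: H_append Union_ins)
qed

lemma arrow_dep: "arrow I c d \<longleftrightarrow> (\<forall>b\<in>d. dep I b c)"
  by (auto simp: arrow_def dep_def)

lemma dep_mono: "dep I b c \<Longrightarrow> c \<subseteq> d \<Longrightarrow> dep I b d"
  by (auto simp: dep_def)

lemma set_ext: "i < length cs \<Longrightarrow> ext cs i \<in> set cs"
  by (simp add: ext_def)

lemma nth_ext: "i < length cs \<Longrightarrow> cs ! i = ext cs i"
  by (simp add: ext_def)

lemma notdep_notin: "irrefl I \<Longrightarrow> \<not> dep I a c \<Longrightarrow> a \<notin> c"
  by (auto simp: dep_def irrefl_def)

locale ts =
  fixes Sg :: "'a set" and I :: "('a \<times> 'a) set"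
  assumes fin: "finite Sg" and irr: "irrefl I" and sy: "sym I" and sub: "I \<subseteq> Sg \<times> Sg"
begin

lemma clique_finite: "is_clique Sg I c \<Longrightarrow> finite c"
  using fin by (auto simp: is_clique_def intro: finite_subset)

definition valid :: "'a set list \<Rightarrow> bool" where
  "valid cs \<longleftrightarrow> (\<forall>c\<in>set cs. is_clique Sg I c) \<and> successively (arrow I) cs"

lemma ins_cliques:
  assumes "\<forall>c\<in>set cs. is_clique Sg I c" "a \<in> Sg"
  shows "\<forall>c\<in>set (ins I cs a). is_clique Sg I c"
proof
  fix c assume "c \<in> set (ins I cs a)"
  then obtain i where i: "i < length (ins I cs a)" "c = ext (ins I cs a) i"
    by (metis in_set_conv_nth nth_ext)
  show "is_clique Sg I c"
  proof (cases "i = kpos I cs a")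
    case True
    have nd: "\<not> dep I a (ext cs i)" using kpos_above[of I cs a i] True by simp
    have cl: "ext cs i = {} \<or> is_clique Sg I (ext cs i)"
      using assms(1) by (auto simp: ext_def)
    have c: "c = insert a (ext cs i)" using i True by (simp add: ext_ins)
    have "\<forall>b\<in>ext cs i. (b, a) \<in> I \<and> (a, b) \<in> I"
      using nd sy by (auto simp: dep_def sym_def)
    then show ?thesis using cl c assms(2) unfolding is_clique_def by auto
  next
    case False
    then have "i < length cs" using i kpos_le[of I cs a] by (simp add: length_ins)
    then show ?thesis using i False assms(1) by (simp add: ext_ins set_ext)
  qed
qed

lemma ins_succ:
  assumes "successively (arrow I) cs"
  shows "successively (arrow I) (ins I cs a)"
  unfolding successively_nth
proof (intro allI impI)
  fix i assume i: "Suc i < length (ins I cs a)"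
  have "\<forall>b\<in>ext (ins I cs a) (Suc i). dep I b (ext (ins I cs a) i)"
  proof
    fix b assume b: "b \<in> ext (ins I cs a) (Suc i)"
    have sub: "ext cs i \<subseteq> ext (ins I cs a) i" by (auto simp: ext_ins)
    show "dep I b (ext (ins I cs a) i)"
    proof (cases "b = a \<and> Suc i = kpos I cs a")
      case True
      then have "kpos I cs a - 1 = i" "0 < kpos I cs a" "b = a" by auto
      then have "dep I b (ext cs i)" using kpos_below[of I cs a] by simp
      then show ?thesis using sub by (rule dep_mono)
    next
      case False
      then have "b \<in> ext cs (Suc i)" using b by (auto simp: ext_ins split: if_splits)
      then have si: "Suc i < length cs" by (auto simp: ext_def split: if_splits)
      then have "arrow I (cs ! i) (cs ! Suc i)" using assms by (simp add: successively_nth)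
      then have "dep I b (ext cs i)" using si \<open>b \<in> ext cs (Suc i)\<close>
        by (simp add: arrow_dep nth_ext)
      then show ?thesis using sub by (rule dep_mono)
    qed
  qed
  moreover have "ins I cs a ! i = ext (ins I cs a) i" using i by (intro nth_ext) simp
  moreover have "ins I cs a ! Suc i = ext (ins I cs a) (Suc i)" using i by (intro nth_ext)
  ultimately show "arrow I (ins I cs a ! i) (ins I cs a ! Suc i)"
    unfolding arrow_dep by simp
qed

lemma ins_teq:
  assumes "\<forall>c\<in>set cs. is_clique Sg I c" "a \<in> Sg"
  shows "teq I (concat (map cword (ins I cs a))) (concat (map cword cs) @ [a])"
proof (cases "kpos I cs a < length cs")
  case False
  then show ?thesis by (simp add: ins_def)
next
  case True
  define k where "k = kpos I cs a"
  define c where "c = cs ! k"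
  define P where "P = concat (map cword (take k cs))"
  define R where "R = concat (map cword (drop (Suc k) cs))"
  have k: "k < length cs" using True k_def by simp
  have cs: "cs = take k cs @ c # drop (Suc k) cs" using k unfolding c_def by (rule id_take_nth_drop)
  have ins: "ins I cs a = take k cs @ insert a c # drop (Suc k) cs"
    using True k_def c_def by (simp add: ins_def upd_conv_take_nth_drop)
  have ccl: "is_clique Sg I c" using assms(1) k c_def by simp
  have nd: "\<not> dep I a c" using kpos_above[of I cs a k] k k_def c_def by (simp add: ext_def)
  then have anc: "a \<notin> c" by (rule notdep_notin[OF irr])
  have "insert a c \<in> set (ins I cs a)" unfolding ins by simp
  then have icl: "is_clique Sg I (insert a c)"
    by (rule ins_cliques[OF assms, rule_format])
  have fc: "finite c" using ccl clique_finite by blast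
  have cw1: "distinct (cword c)" "set (cword c) = c" using cword[OF fc] by auto
  have cw2: "distinct (cword (insert a c))" "set (cword (insert a c)) = insert a c"
    using cword[of "insert a c"] fc by auto
  have w1: "teq I (cword (insert a c)) (cword c @ [a])"
  proof (rule teq_perm[OF sy])
    show "distinct (cword (insert a c))" by (rule cw2(1))
    show "distinct (cword c @ [a])" using cw1 anc by simp
    show "set (cword (insert a c)) = set (cword c @ [a])" using cw1 cw2 by simp
    show "\<forall>x\<in>set (cword (insert a c)). \<forall>y\<in>set (cword (insert a c)). x \<noteq> y \<longrightarrow> (x, y) \<in> I"
      using icl cw2 unfolding is_clique_def by simp
  qed
  have RI: "\<forall>y\<in>set R. (y, a) \<in> I"
  proof
    fix y assume "y \<in> set R"
    then obtain d where d: "d \<in> set (drop (Suc k) cs)" "y \<in> set (cword d)"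
      unfolding R_def by auto
    then obtain j where j: "j < length (drop (Suc k) cs)" "d = drop (Suc k) cs ! j"
      unfolding in_set_conv_nth by blast
    then have d2: "d = ext cs (Suc k + j)" by (auto simp: ext_def)
    have "\<not> dep I a d" unfolding d2 by (rule kpos_above) (simp add: k_def)
    moreover have "d \<in> set cs" using d(1) in_set_dropD by fast
    then have "finite d" using assms(1) clique_finite by blast
    then have "y \<in> d" using d(2) cword by blast
    ultimately show "(y, a) \<in> I" by (auto simp: dep_def)
  qed
  have "teq I (P @ cword (insert a c) @ R) (P @ (cword c @ [a]) @ R)"
    by (rule teq_cong[OF w1])
  moreover have "teq I ([a] @ R) (R @ [a])"
    using teq_sym[OF sy teq_move[OF RI]] by simp
  then have "teq I ((P @ cword c) @ ([a] @ R) @ []) ((P @ cword c) @ (R @ [a]) @ [])"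
    by (rule teq_cong)
  ultimately have "teq I (P @ cword (insert a c) @ R) (P @ cword c @ R @ [a])"
    using teq_trans by (metis append.assoc append_Cons append_Nil append_Nil2)
  moreover have "concat (map cword (ins I cs a)) = P @ cword (insert a c) @ R"
    unfolding ins P_def R_def by simp
  moreover have "concat (map cword (take k cs @ c # drop (Suc k) cs)) = P @ cword c @ R"
    unfolding P_def R_def by simp
  then have "concat (map cword cs) = P @ cword c @ R"
    by (simp only: cs[symmetric])
  ultimately show ?thesis by simp
qed

lemma H_valid: "set w \<subseteq> Sg \<Longrightarrow> is_nf Sg I (H I w) w"
proof (induction w rule: rev_induct)
  case Nil then show ?case by (simp add: H_def is_nf_def)
next
  case (snoc a w)
  then have IH: "is_nf Sg I (H I w) w" and a: "a \<in> Sg" by auto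
  have "H I (w @ [a]) = ins I (H I w) a" by (simp add: H_append)
  moreover have "\<forall>c\<in>set (ins I (H I w) a). is_clique Sg I c"
    using ins_cliques[OF _ a] IH unfolding is_nf_def by blast
  moreover have "successively (arrow I) (ins I (H I w) a)"
    using ins_succ IH by (simp add: is_nf_def)
  moreover have "teq I (concat (map cword (ins I (H I w) a))) (w @ [a])"
  proof -
    have "teq I (concat (map cword (ins I (H I w) a))) (concat (map cword (H I w)) @ [a])"
      using ins_teq a IH by (simp add: is_nf_def)
    moreover have "teq I (concat (map cword (H I w)) @ [a]) (w @ [a])"
      using IH teq_congR[of I _ w "[a]"] unfolding is_nf_def by blast
    ultimately show ?thesis using teq_trans by fastforce
  qed
  ultimately show ?case by (simp add: is_nf_def)
qed

lemma ext_last: "cs \<noteq> [] \<Longrightarrow> ext cs (length cs - 1) = last cs"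
  by (simp add: ext_def last_conv_nth)

lemma fold_clique:
  assumes cl: "is_clique Sg I c" and lst: "cs \<noteq> [] \<Longrightarrow> \<forall>b\<in>c. dep I b (last cs)"
  shows "distinct u \<Longrightarrow> u \<noteq> [] \<Longrightarrow> set u \<subseteq> c \<Longrightarrow> foldl (ins I) cs u = cs @ [set u]"
proof (induction u rule: rev_induct)
  case Nil then show ?case by simp
next
  case (snoc b u)
  have bc: "b \<in> c" using snoc by simp
  have low: "dep I b (ext (cs @ ds) (length cs - 1))" if "0 < length cs" for ds
  proof -
    have "ext (cs @ ds) (length cs - 1) = last cs"
    proof -
      have l: "length cs - 1 < length cs" "length cs - 1 < length cs + length ds" using that by linarith+
      have "ext (cs @ ds) (length cs - 1) = cs ! (length cs - 1)"
        using l by (simp add: ext_def nth_append)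
      then show ?thesis using that by (simp add: last_conv_nth)
    qed
    then show ?thesis using lst bc that by simp
  qed
  show ?case
  proof (cases "u = []")
    case True
    have "kpos I cs b = length cs"
    proof (rule kpos_eqI)
      show "\<not> dep I b (ext cs i)" if "length cs \<le> i" for i using that by (simp add: ext_def)
      show "dep I b (ext cs (length cs - 1))" if "0 < length cs"
        using low[of "[]"] that by simp
    qed
    then show ?thesis using True by (simp add: ins_def)
  next
    case False
    then have IH: "foldl (ins I) cs u = cs @ [set u]" using snoc by simp
    have nd: "\<not> dep I b (set u)"
    proof
      assume "dep I b (set u)"
      then obtain x where x: "x \<in> set u" "(x, b) \<notin> I" by (auto simp: dep_def)
      moreover have "x \<noteq> b" using x snoc.prems by auto
      moreover have "x \<in> c" using x snoc.prems by auto
      ultimately show False using cl bc unfolding is_clique_def by blast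
    qed
    have "kpos I (cs @ [set u]) b = length cs"
    proof (rule kpos_eqI)
      show "\<not> dep I b (ext (cs @ [set u]) i)" if "length cs \<le> i" for i
        using that nd by (cases "i = length cs") (simp_all add: ext_def nth_append)
      show "dep I b (ext (cs @ [set u]) (length cs - 1))" if "0 < length cs"
        using low[of "[set u]"] that by simp
    qed
    then have "ins I (cs @ [set u]) b = cs @ [insert b (set u)]" by (simp add: ins_def)
    then show ?thesis using IH by simp
  qed
qed

lemma H_concat: "valid cs \<Longrightarrow> H I (concat (map cword cs)) = cs"
proof (induction cs rule: rev_induct)
  case Nil then show ?case by (simp add: H_def)
next
  case (snoc c cs)
  have v: "valid cs" and cl: "is_clique Sg I c"
    and ar: "cs \<noteq> [] \<Longrightarrow> arrow I (last cs) c"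
    using snoc.prems by (auto simp: valid_def successively_append_iff)
  have fc: "finite c" using cl clique_finite by blast
  have "H I (concat (map cword (cs @ [c]))) = foldl (ins I) cs (cword c)"
    using snoc.IH v by (simp add: H_append)
  also have "\<dots> = cs @ [set (cword c)]"
  proof (rule fold_clique[OF cl])
    show "cs \<noteq> [] \<Longrightarrow> \<forall>b\<in>c. dep I b (last cs)" using ar by (simp add: arrow_dep)
    show "distinct (cword c)" using cword fc by blast
    show "cword c \<noteq> []" using cword[OF fc] cl by (auto simp: is_clique_def)
    show "set (cword c) \<subseteq> c" using cword fc by blast
  qed
  finally show ?case using cword[OF fc] by simp
qed

lemma nf_unique: "is_nf Sg I cs w \<Longrightarrow> cs = H I w"
proof -
  assume a: "is_nf Sg I cs w"
  then have "H I (concat (map cword cs)) = H I w" using H_teq[OF sy] by (simp add: is_nf_def)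
  moreover have "valid cs" using a by (simp add: is_nf_def valid_def)
  ultimately show ?thesis using H_concat by simp
qed

lemma nf_eq: "is_nf Sg I cs w \<Longrightarrow> nf Sg I w = cs"
  unfolding nf_def using nf_unique by (metis the_equality)

lemma nf_H: "set w \<subseteq> Sg \<Longrightarrow> nf Sg I w = H I w"
  using H_valid nf_eq by blast

end


locale csys =
  fixes Sg :: "'a set" and I :: "('a \<times> 'a) set" and X :: "'s set" and delta
  assumes csy: "conc_system Sg I X delta"

sublocale csys \<subseteq> ts Sg I
  using csy unfolding conc_system_def indep_rel_def by unfold_locales auto

context csys
begin

lemma act_X: "s \<in> X \<Longrightarrow> set w \<subseteq> Sg \<Longrightarrow> act delta (Some s) w = Some t \<Longrightarrow> t \<in> X"
proof (induction w arbitrary: s)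
  case Nil then show ?case by simp
next
  case (Cons a w)
  show ?case
  proof (cases "delta s a")
    case None then show ?thesis using Cons.prems by simp
  next
    case (Some s')
    then have "s' \<in> X" using csy Cons.prems unfolding conc_system_def by force
    then show ?thesis using Cons Some by simp
  qed
qed

lemma act_teq:
  assumes "s \<in> X" "set u \<subseteq> Sg"
  shows "teq I u v \<Longrightarrow> act delta (Some s) u = act delta (Some s) v"
  unfolding teq_def
proof (induction rule: rtranclp_induct)
  case base then show ?case by simp
next
  case (step y z)
  then obtain p q a b where ab: "(a, b) \<in> I" and y: "y = p @ [a, b] @ q" and z: "z = p @ [b, a] @ q"
    unfolding swap1_def by blast
  have "set y \<subseteq> Sg" using step.hyps(1) assms(2) teq_set[of I u y] by (simp add: teq_def)
  then have p: "set p \<subseteq> Sg" using y by auto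
  have "act delta (Some s) y = act delta (Some s) z"
  proof (cases "act delta (Some s) p")
    case None then show ?thesis using y z by (simp add: act_append)
  next
    case (Some s')
    then have "s' \<in> X" using act_X assms(1) p by blast
    then have "act delta (Some s') [a, b] = act delta (Some s') [b, a]"
      using csy ab unfolding conc_system_def by blast
    then show ?thesis using y z Some
      by (metis act_append append_Cons append_Nil)
  qed
  then show ?case using step.IH by simp
qed

lemma act_prefix: "act delta s (u @ v) \<noteq> None \<Longrightarrow> act delta s u \<noteq> None"
  by (cases "act delta s u") (simp_all add: act_append)

lemma nf_is_H: "set w \<subseteq> Sg \<Longrightarrow> nf Sg I w = H I w"
  by (rule nf_H)

lemma Mst_set: "w \<in> Mst Sg delta s \<Longrightarrow> set w \<subseteq> Sg"
  by (simp add: Mst_def)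

lemma hd_clique:
  assumes "\<alpha> \<in> X" "w \<in> Mst Sg delta (Some \<alpha>)" "H I w \<noteq> []"
  shows "hd (H I w) \<in> cliques_at Sg I delta \<alpha>"
proof -
  obtain d ds where dd: "H I w = d # ds" using assms(3) by (cases "H I w") auto
  have sw: "set w \<subseteq> Sg" using assms(2) by (simp add: Mst_def)
  have nf: "is_nf Sg I (H I w) w" using H_valid sw by blast
  then have dcl: "is_clique Sg I d" using dd by (simp add: is_nf_def)
  have t: "teq I w (cword d @ concat (map cword ds))"
    using nf dd teq_sym[OF sy] by (simp add: is_nf_def)
  have "act delta (Some \<alpha>) (cword d @ concat (map cword ds)) = act delta (Some \<alpha>) w"
    using act_teq[OF assms(1) sw t] by simp
  also have "\<dots> \<noteq> None" using assms(2) by (simp add: Mst_def)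
  finally have "act delta (Some \<alpha>) (cword d) \<noteq> None" by (rule act_prefix)
  then show ?thesis using dcl dd by (simp add: cliques_at_def)
qed

lemma hd_ext: "cs \<noteq> [] \<Longrightarrow> hd cs = ext cs 0"
  by (simp add: ext_def hd_conv_nth)

lemma ins_ne: "ins I cs a \<noteq> []"
  using length_ins[of I cs a] by auto

lemma hd_ins: "cs \<noteq> [] \<Longrightarrow> hd cs \<subseteq> hd (ins I cs a)"
  using ins_ne[of cs a] by (simp add: hd_ext ext_ins) blast

lemma hd_foldl: "cs \<noteq> [] \<Longrightarrow> foldl (ins I) cs y \<noteq> [] \<and> hd cs \<subseteq> hd (foldl (ins I) cs y)"
proof (induction y arbitrary: cs)
  case Nil then show ?case by simp
next
  case (Cons a y)
  have "ins I cs a \<noteq> []" by (rule ins_ne)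
  then have "foldl (ins I) (ins I cs a) y \<noteq> [] \<and> hd (ins I cs a) \<subseteq> hd (foldl (ins I) (ins I cs a) y)"
    by (rule Cons.IH)
  then show ?case using hd_ins[OF Cons.prems, of a] by auto
qed

lemma H_single: "is_clique Sg I c \<Longrightarrow> H I (cword c) = [c]"
proof -
  assume "is_clique Sg I c"
  then have "valid [c]" by (simp add: valid_def)
  then show ?thesis using H_concat[of "[c]"] by simp
qed

lemma part1:
  assumes "\<alpha> \<in> X" "c \<in> cliques_at Sg I delta \<alpha>"
    "\<forall>c'\<in>cliques_at Sg I delta \<alpha>. c \<subseteq> c' \<longrightarrow> c' = c"
  shows "positive_node Sg I delta \<alpha> c"
  unfolding positive_node_def
proof (intro conjI bexI[of _ "cword c"])
  show "dsc_node Sg I delta \<alpha> c" using assms(2) by (simp add: dsc_node_def)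
  have cl: "is_clique Sg I c" and ac: "act delta (Some \<alpha>) (cword c) \<noteq> None"
    using assms(2) by (auto simp: cliques_at_def)
  have fc: "finite c" using cl clique_finite by blast
  have sc: "set (cword c) \<subseteq> Sg" using cword[OF fc] cl by (auto simp: is_clique_def)
  show "cword c \<in> Mst Sg delta (Some \<alpha>)" using sc ac by (simp add: Mst_def)
  show "\<forall>y\<in>Mst Sg delta (act delta (Some \<alpha>) (cword c)). nf Sg I (cword c @ y) \<noteq> [] \<and> hd (nf Sg I (cword c @ y)) = c"
  proof
  fix y assume y: "y \<in> Mst Sg delta (act delta (Some \<alpha>) (cword c))"
  have sw: "set (cword c @ y) \<subseteq> Sg" using sc y by (auto simp: Mst_def)
  have wM: "cword c @ y \<in> Mst Sg delta (Some \<alpha>)" using sw y by (simp add: Mst_def act_append)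
  have Hw: "H I (cword c @ y) = foldl (ins I) [c] y"
    using H_single[OF cl] by (simp add: H_append)
  then have ne: "H I (cword c @ y) \<noteq> []" and sub: "c \<subseteq> hd (H I (cword c @ y))"
    using hd_foldl[of "[c]" y] by auto
  have "hd (H I (cword c @ y)) \<in> cliques_at Sg I delta \<alpha>"
    by (rule hd_clique[OF assms(1) wM ne])
  then have "hd (H I (cword c @ y)) = c" using assms(3) sub by blast
  then show "nf Sg I (cword c @ y) \<noteq> [] \<and> hd (nf Sg I (cword c @ y)) = c"
    using ne nf_is_H[OF sw] by simp
  qed
qed

lemma part2:
  assumes "\<alpha> \<in> X" "dsc_arc Sg I delta \<alpha> c \<alpha>' c'" "positive_node Sg I delta \<alpha>' c'"
  shows "positive_node Sg I delta \<alpha> c"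
proof -
  have nd: "dsc_node Sg I delta \<alpha> c" and st: "act delta (Some \<alpha>) (cword c) = Some \<alpha>'"
    and ar: "arrow I c c'"
    using assms(2) by (auto simp: dsc_arc_def)
  have cl: "is_clique Sg I c" using nd by (simp add: dsc_node_def cliques_at_def)
  have fc: "finite c" using cl clique_finite by blast
  have sc: "set (cword c) \<subseteq> Sg" using cword[OF fc] cl by (auto simp: is_clique_def)
  obtain x' where x': "x' \<in> Mst Sg delta (Some \<alpha>')"
    and hx: "\<forall>y\<in>Mst Sg delta (act delta (Some \<alpha>') x'). nf Sg I (x' @ y) \<noteq> [] \<and> hd (nf Sg I (x' @ y)) = c'"
    using assms(3) unfolding positive_node_def by blast
  show ?thesis
    unfolding positive_node_def
  proof (intro conjI bexI[of _ "cword c @ x'"])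
    show "dsc_node Sg I delta \<alpha> c" by (rule nd)
    show "cword c @ x' \<in> Mst Sg delta (Some \<alpha>)"
      using x' sc st by (simp add: Mst_def act_append)
    show "\<forall>y\<in>Mst Sg delta (act delta (Some \<alpha>) (cword c @ x')). nf Sg I ((cword c @ x') @ y) \<noteq> [] \<and> hd (nf Sg I ((cword c @ x') @ y)) = c"
    proof
    fix y assume y: "y \<in> Mst Sg delta (act delta (Some \<alpha>) (cword c @ x'))"
    then have y': "y \<in> Mst Sg delta (act delta (Some \<alpha>') x')" using st by (simp add: act_append)
    define z where "z = x' @ y"
    have sz: "set z \<subseteq> Sg" using x' y' by (auto simp: Mst_def z_def)
    have hz: "H I z \<noteq> [] \<and> hd (H I z) = c'" using hx[rule_format, OF y'] nf_is_H[OF sz] z_def by simp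
    have nfz: "is_nf Sg I (H I z) z" using H_valid[OF sz] .
    have "is_nf Sg I (c # H I z) (cword c @ z)"
      unfolding is_nf_def
    proof (intro conjI)
      show "\<forall>d\<in>set (c # H I z). is_clique Sg I d" using cl nfz by (simp add: is_nf_def)
      show "successively (arrow I) (c # H I z)"
        using nfz hz ar by (simp add: is_nf_def successively_Cons)
      show "teq I (concat (map cword (c # H I z))) (cword c @ z)"
        using nfz teq_congL[of I _ z "cword c"] by (simp add: is_nf_def)
    qed
    then have "nf Sg I (cword c @ z) = c # H I z" by (rule nf_eq)
    then show "nf Sg I ((cword c @ x') @ y) \<noteq> [] \<and> hd (nf Sg I ((cword c @ x') @ y)) = c"
      by (simp add: z_def)
    qed
  qed
qed

lemma hd_foldl_full:
  "cs \<noteq> [] \<Longrightarrow> Sg \<subseteq> \<Union>(set cs) \<Longrightarrow> set y \<subseteq> Sg \<Longrightarrow>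
     foldl (ins I) cs y \<noteq> [] \<and> hd (foldl (ins I) cs y) = hd cs"
proof (induction y arbitrary: cs)
  case Nil then show ?case by simp
next
  case (Cons b y)
  have "b \<in> \<Union>(set cs)" using Cons.prems by auto
  then obtain i where i: "b \<in> ext cs i" unfolding Union_ext by blast
  have "dep I b (ext cs i)" using i irr by (auto simp: dep_def irrefl_def)
  then have "\<not> kpos I cs b \<le> i" using kpos_above[of I cs b i] by blast
  then have kp: "kpos I cs b \<noteq> 0" by simp
  have ne: "ins I cs b \<noteq> []" by (rule ins_ne)
  have "hd (ins I cs b) = hd cs" using kp ne Cons.prems(1) by (simp add: hd_ext ext_ins)
  moreover have "Sg \<subseteq> \<Union>(set (ins I cs b))" using Cons.prems(2) by (simp add: Union_ins) blast
  ultimately show ?case using Cons.IH[OF ne] Cons.prems(3) by simp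
qed

lemma part4:
  assumes "\<alpha> \<in> X" "null_node Sg I delta \<alpha> c" "x \<in> Mst Sg delta (Some \<alpha>)"
    "nf Sg I x \<noteq> []" "hd (nf Sg I x) = c"
  shows "\<exists>a\<in>Sg. a \<notin> set x"
proof (rule ccontr)
  assume "\<not> (\<exists>a\<in>Sg. a \<notin> set x)"
  then have all: "Sg \<subseteq> set x" by blast
  have sx: "set x \<subseteq> Sg" using assms(3) by (simp add: Mst_def)
  have hx: "H I x \<noteq> []" "hd (H I x) = c" using assms(4,5) nf_is_H[OF sx] by auto
  have "positive_node Sg I delta \<alpha> c"
    unfolding positive_node_def
  proof (intro conjI bexI[of _ x])
    show "dsc_node Sg I delta \<alpha> c" using assms(2) by (simp add: null_node_def)
    show "x \<in> Mst Sg delta (Some \<alpha>)" by (rule assms(3))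
    show "\<forall>y\<in>Mst Sg delta (act delta (Some \<alpha>) x). nf Sg I (x @ y) \<noteq> [] \<and> hd (nf Sg I (x @ y)) = c"
    proof
    fix y assume y: "y \<in> Mst Sg delta (act delta (Some \<alpha>) x)"
    have sy': "set y \<subseteq> Sg" using y by (simp add: Mst_def)
    have sxy: "set (x @ y) \<subseteq> Sg" using sx sy' by simp
    have "foldl (ins I) (H I x) y \<noteq> [] \<and> hd (foldl (ins I) (H I x) y) = hd (H I x)"
      using hd_foldl_full[OF hx(1) _ sy'] all Union_H[of I x] by simp
    then show "nf Sg I (x @ y) \<noteq> [] \<and> hd (nf Sg I (x @ y)) = c"
      using nf_is_H[OF sxy] hx by (simp add: H_append)
    qed
  qed
  then show False using assms(2) by (simp add: null_node_def)
qed

end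


lemma len_concat_bound: "(\<forall>c\<in>set cs. length (f c) \<le> B) \<Longrightarrow> length (concat (map f cs)) \<le> length cs * B"
  by (induction cs) auto

context csys
begin

lemma len_bound: "set w \<subseteq> Sg \<Longrightarrow> length w \<le> length (H I w) * card Sg"
proof -
  assume sw: "set w \<subseteq> Sg"
  have nf: "is_nf Sg I (H I w) w" using H_valid[OF sw] .
  then have "length w = length (concat (map cword (H I w)))"
    using teq_length by (metis is_nf_def)
  also have "\<dots> \<le> length (H I w) * card Sg"
  proof (rule len_concat_bound, rule ballI)
    fix c assume "c \<in> set (H I w)"
    then have cl: "is_clique Sg I c" using nf by (simp add: is_nf_def)
    then have fc: "finite c" using clique_finite by blast
    have "length (cword c) = card c" using cword[OF fc] distinct_card by metis
    also have "\<dots> \<le> card Sg" using cl fin by (simp add: is_clique_def card_mono)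
    finally show "length (cword c) \<le> card Sg" .
  qed
  finally show ?thesis .
qed

lemma path:
  assumes "\<alpha> \<in> X" "w \<in> Mst Sg delta (Some \<alpha>)" "i < length (H I w)"
  shows "\<exists>\<beta>. act delta (Some \<alpha>) (concat (map cword (take i (H I w)))) = Some \<beta> \<and> \<beta> \<in> X \<and>
     act delta (Some \<beta>) (cword (H I w ! i)) = act delta (Some \<alpha>) (concat (map cword (take (Suc i) (H I w)))) \<and>
     act delta (Some \<alpha>) (concat (map cword (take (Suc i) (H I w)))) \<noteq> None"
proof -
  define cs where "cs = H I w"
  define W where "W = concat (map cword cs)"
  have sw: "set w \<subseteq> Sg" using assms(2) by (simp add: Mst_def)
  have t: "teq I W w" using H_valid[OF sw] by (simp add: is_nf_def W_def cs_def)
  have sW: "set W \<subseteq> Sg" using teq_set[OF t] sw by simp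
  have "act delta (Some \<alpha>) W = act delta (Some \<alpha>) w" using act_teq[OF assms(1) sW t] .
  then have aW: "act delta (Some \<alpha>) W \<noteq> None" using assms(2) by (simp add: Mst_def)
  have W: "W = concat (map cword (take (Suc i) cs)) @ concat (map cword (drop (Suc i) cs))"
    unfolding W_def by (metis append_take_drop_id concat_append map_append)
  have a1: "act delta (Some \<alpha>) (concat (map cword (take (Suc i) cs))) \<noteq> None"
    using aW W act_prefix by metis
  have tk: "concat (map cword (take (Suc i) cs)) = concat (map cword (take i cs)) @ cword (cs ! i)"
    using assms(3) by (simp add: take_Suc_conv_app_nth cs_def)
  then have "act delta (Some \<alpha>) (concat (map cword (take i cs))) \<noteq> None"
    using a1 act_prefix by metis
  then obtain \<beta> where b: "act delta (Some \<alpha>) (concat (map cword (take i cs))) = Some \<beta>" by blast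
  have "set (concat (map cword (take i cs))) \<subseteq> set W"
    using W tk by auto
  then have "\<beta> \<in> X" using act_X[OF assms(1) _ b] sW by blast
  moreover have "act delta (Some \<beta>) (cword (cs ! i)) = act delta (Some \<alpha>) (concat (map cword (take (Suc i) cs)))"
    using tk b by (simp add: act_append)
  ultimately show ?thesis using b a1 cs_def by blast
qed

lemma part3:
  assumes aX: "\<alpha> \<in> X" and xM: "x \<in> Mst Sg delta (Some \<alpha>)"
  shows "\<exists>y\<in>Mst Sg delta (act delta (Some \<alpha>) x).
       height Sg I (x @ y) = height Sg I x \<and>
       (\<forall>i<height Sg I (x @ y).
          positive_node Sg I delta
            (the (act delta (Some \<alpha>) (concat (map cword (take i (nf Sg I (x @ y)))))))
            (nf Sg I (x @ y) ! i))"
proof -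
  have sx: "set x \<subseteq> Sg" using xM by (simp add: Mst_def)
  define Q where "Q n \<longleftrightarrow> (\<exists>y\<in>Mst Sg delta (act delta (Some \<alpha>) x).
      length (H I (x @ y)) = length (H I x) \<and> length y = n)" for n
  have Q0: "Q 0" unfolding Q_def
    by (rule bexI[of _ "[]"]) (use xM in \<open>auto simp: Mst_def\<close>)
  have Qb: "\<forall>n. Q n \<longrightarrow> n \<le> length (H I x) * card Sg"
  proof (intro allI impI)
    fix n assume "Q n"
    then obtain y where y: "y \<in> Mst Sg delta (act delta (Some \<alpha>) x)"
      "length (H I (x @ y)) = length (H I x)" "length y = n" unfolding Q_def by blast
    have "set (x @ y) \<subseteq> Sg" using sx y(1) by (simp add: Mst_def)
    then have "length (x @ y) \<le> length (H I (x @ y)) * card Sg" by (rule len_bound)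
    then show "n \<le> length (H I x) * card Sg" using y by simp
  qed
  obtain n where Qn: "Q n" and nmax: "\<And>m. Q m \<Longrightarrow> m \<le> n"
    using Nat.ex_has_greatest_nat[OF Q0 Qb] by blast
  then obtain y0 where y0: "y0 \<in> Mst Sg delta (act delta (Some \<alpha>) x)"
      "length (H I (x @ y0)) = length (H I x)" "length y0 = n" unfolding Q_def by blast
  define w where "w = x @ y0"
  have sw: "set w \<subseteq> Sg" using sx y0(1) by (simp add: Mst_def w_def)
  have wM: "w \<in> Mst Sg delta (Some \<alpha>)" using sw y0(1) by (simp add: Mst_def w_def act_append)
  define cs where "cs = H I w"
  define h where "h = length cs"
  define T where "T i = concat (map cword (take i cs))" for i
  define \<beta> where "\<beta> i = the (act delta (Some \<alpha>) (T i))" for i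
  have nfw: "is_nf Sg I cs w" using H_valid[OF sw] cs_def by simp
  have pth: "act delta (Some \<alpha>) (T i) = Some (\<beta> i) \<and> \<beta> i \<in> X \<and>
      act delta (Some (\<beta> i)) (cword (cs ! i)) = act delta (Some \<alpha>) (T (Suc i)) \<and>
      act delta (Some \<alpha>) (T (Suc i)) \<noteq> None" if "i < h" for i
    using path[OF aX wM, of i] that unfolding h_def cs_def T_def \<beta>_def by auto
  have cli: "is_clique Sg I (cs ! i)" if "i < h" for i
    using nfw that unfolding h_def is_nf_def by auto
  have node: "dsc_node Sg I delta (\<beta> i) (cs ! i)" if "i < h" for i
    using pth[OF that] cli[OF that] by (simp add: dsc_node_def cliques_at_def)
  have step: "positive_node Sg I delta (\<beta> i) (cs ! i)"
    if "Suc i < h" "positive_node Sg I delta (\<beta> (Suc i)) (cs ! Suc i)" for i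
  proof (rule part2)
    show "\<beta> i \<in> X" using pth that(1) by simp
    show "positive_node Sg I delta (\<beta> (Suc i)) (cs ! Suc i)" by (rule that(2))
    have "arrow I (cs ! i) (cs ! Suc i)"
      using nfw that(1) unfolding is_nf_def successively_nth h_def by blast
    moreover have "act delta (Some (\<beta> i)) (cword (cs ! i)) = Some (\<beta> (Suc i))"
      using pth[of i] pth[of "Suc i"] that(1) by simp
    ultimately show "dsc_arc Sg I delta (\<beta> i) (cs ! i) (\<beta> (Suc i)) (cs ! Suc i)"
      using node[of i] node[of "Suc i"] that(1) by (simp add: dsc_arc_def)
  qed
  have last: "positive_node Sg I delta (\<beta> (h - 1)) (cs ! (h - 1))" if "0 < h"
  proof -
    define j where "j = h - 1"
    define d where "d = cs ! j"
    define b where "b = \<beta> j"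
    have jh: "j < h" "Suc j = h" using that j_def by auto
    have bX: "b \<in> X" using pth[OF jh(1)] b_def by simp
    have dcl: "is_clique Sg I d" using cli[OF jh(1)] d_def by simp
    have fd: "finite d" using dcl clique_finite by blast
    have sd: "set (cword d) \<subseteq> Sg" using cword[OF fd] dcl by (auto simp: is_clique_def)
    have abd: "act delta (Some b) (cword d) = act delta (Some \<alpha>) w"
    proof -
      have "act delta (Some b) (cword d) = act delta (Some \<alpha>) (T h)"
        using pth[OF jh(1)] jh b_def d_def by simp
      also have "T h = concat (map cword cs)" unfolding T_def h_def by simp
      also have "act delta (Some \<alpha>) (concat (map cword cs)) = act delta (Some \<alpha>) w"
      proof -
        have t: "teq I (concat (map cword cs)) w" using nfw by (simp add: is_nf_def)
        have "set (concat (map cword cs)) \<subseteq> Sg" using teq_set[OF t] sw by simp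
        then show ?thesis using act_teq[OF aX _ t] by blast
      qed
      finally show ?thesis .
    qed
    have adn: "act delta (Some b) (cword d) \<noteq> None" using abd wM by (simp add: Mst_def)
    have "positive_node Sg I delta b d"
      unfolding positive_node_def
    proof (intro conjI bexI[of _ "cword d"])
      show "dsc_node Sg I delta b d" using node[OF jh(1)] b_def d_def by simp
      show "cword d \<in> Mst Sg delta (Some b)" using sd adn by (simp add: Mst_def)
      show "\<forall>z\<in>Mst Sg delta (act delta (Some b) (cword d)). nf Sg I (cword d @ z) \<noteq> [] \<and> hd (nf Sg I (cword d @ z)) = d"
      proof
        fix z assume z: "z \<in> Mst Sg delta (act delta (Some b) (cword d))"
        have sdz: "set (cword d @ z) \<subseteq> Sg" using sd z by (simp add: Mst_def)
        have dzM: "cword d @ z \<in> Mst Sg delta (Some b)" using sdz z by (simp add: Mst_def act_append)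
        have Hdz: "H I (cword d @ z) = foldl (ins I) [d] z"
          using H_single[OF dcl] by (simp add: H_append)
        then have ne: "H I (cword d @ z) \<noteq> []" and sub: "d \<subseteq> hd (H I (cword d @ z))"
          using hd_foldl[of "[d]" z] by auto
        define e where "e = hd (H I (cword d @ z))"
        have eC: "e \<in> cliques_at Sg I delta b" unfolding e_def by (rule hd_clique[OF bX dzM ne])
        have "e = d"
        proof (rule ccontr)
          assume "e \<noteq> d"
          then obtain a where a: "a \<in> e" "a \<notin> d" using sub e_def by blast
          have ecl: "is_clique Sg I e" and ae: "act delta (Some b) (cword e) \<noteq> None"
            using eC by (auto simp: cliques_at_def)
          have fe: "finite e" using ecl clique_finite by blast
          have de: "d \<subseteq> e" using sub e_def by simp
          have aS: "a \<in> Sg" using a ecl by (auto simp: is_clique_def)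
          define r where "r = cword (e - insert a d)"
          have fr: "finite (e - insert a d)" using fe by simp
          have te: "teq I (cword e) (cword d @ [a] @ r)"
          proof (rule teq_perm[OF sy])
            show "distinct (cword e)" using cword[OF fe] by simp
            show "distinct (cword d @ [a] @ r)" using cword[OF fd] cword[OF fr] a unfolding r_def by auto
            show "set (cword e) = set (cword d @ [a] @ r)" using cword[OF fd] cword[OF fr] cword[OF fe] a de
              unfolding r_def by auto
            show "\<forall>x\<in>set (cword e). \<forall>y\<in>set (cword e). x \<noteq> y \<longrightarrow> (x, y) \<in> I"
              using cword[OF fe] ecl by (simp add: is_clique_def)
          qed
          have se: "set (cword e) \<subseteq> Sg" using cword[OF fe] ecl by (simp add: is_clique_def)
          have "act delta (Some b) ((cword d @ [a]) @ r) \<noteq> None"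
            using act_teq[OF bX se te] ae by simp
          then have ada: "act delta (Some b) (cword d @ [a]) \<noteq> None" by (rule act_prefix)
          have "act delta (Some \<alpha>) (w @ [a]) = act delta (Some b) (cword d @ [a])"
            using abd by (simp add: act_append)
          then have "act delta (act delta (Some \<alpha>) x) (y0 @ [a]) \<noteq> None"
            using ada by (simp add: act_append w_def)
          then have yM: "y0 @ [a] \<in> Mst Sg delta (act delta (Some \<alpha>) x)"
            using y0(1) aS by (simp add: Mst_def)
          have nda: "\<not> dep I a d"
          proof
            assume "dep I a d"
            then obtain c where "c \<in> d" "(c, a) \<notin> I" by (auto simp: dep_def)
            moreover have "c \<noteq> a" using \<open>c \<in> d\<close> a by auto
            ultimately show False using ecl de a by (auto simp: is_clique_def)
          qed
          have "kpos I cs a \<noteq> h"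
          proof
            assume kh: "kpos I cs a = h"
            then have "dep I a (ext cs (kpos I cs a - 1))" using kpos_below[of I cs a] that by simp
            then have "dep I a d" using kh jh unfolding d_def j_def h_def by (simp add: ext_def)
            then show False using nda by simp
          qed
          then have "kpos I cs a < h" using kpos_le[of I cs a] h_def by simp
          then have "length (ins I cs a) = h" using h_def by (simp add: length_ins)
          then have "length (H I (x @ y0 @ [a])) = length (H I x)"
            using y0(2) by (simp add: H_append cs_def w_def h_def)
          then have "Q (Suc n)" unfolding Q_def using yM y0(3) by (intro bexI[of _ "y0 @ [a]"]) simp_all
          then show False using nmax by fastforce
        qed
        then show "nf Sg I (cword d @ z) \<noteq> [] \<and> hd (nf Sg I (cword d @ z)) = d"
          using ne nf_is_H[OF sdz] e_def by simp
      qed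
    qed
    then show ?thesis using b_def d_def j_def by simp
  qed
  have allpos: "positive_node Sg I delta (\<beta> (h - 1 - m)) (cs ! (h - 1 - m))" if "m < h" for m
    using that
  proof (induction m)
    case 0 then show ?case using last by simp
  next
    case (Suc m)
    have e: "Suc (h - 1 - Suc m) = h - 1 - m" using Suc.prems by simp
    show ?case
    proof (rule step)
      show "Suc (h - 1 - Suc m) < h" using Suc.prems by simp
      show "positive_node Sg I delta (\<beta> (Suc (h - 1 - Suc m))) (cs ! Suc (h - 1 - Suc m))"
        unfolding e using Suc by simp
    qed
  qed
  have nfxy: "nf Sg I (x @ y0) = cs" using nf_is_H[OF sw] cs_def w_def by simp
  have hx: "height Sg I x = h" using nf_is_H[OF sx] y0(2) cs_def h_def w_def by (simp add: height_def)
  show ?thesis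
  proof (rule bexI[OF _ y0(1)], intro conjI allI impI)
    show "height Sg I (x @ y0) = height Sg I x" using hx nfxy h_def by (simp add: height_def)
    fix i assume "i < height Sg I (x @ y0)"
    then have i: "i < h" using nfxy h_def by (simp add: height_def)
    then have "i = h - 1 - (h - 1 - i)" by simp
    then have "positive_node Sg I delta (\<beta> i) (cs ! i)" using allpos[of "h - 1 - i"] i by simp
    then show "positive_node Sg I delta
            (the (act delta (Some \<alpha>) (concat (map cword (take i (nf Sg I (x @ y0)))))))
            (nf Sg I (x @ y0) ! i)"
      using nfxy by (simp add: \<beta>_def T_def)
  qed
qed

end

theorem proposition6:
  assumes "conc_system Sg I X delta"
  shows
   "(\<forall>\<alpha>\<in>X. Mst Sg delta (Some \<alpha>) \<noteq> {[]} \<longrightarrow>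
       (\<forall>c. c \<in> cliques_at Sg I delta \<alpha> \<and> (\<forall>c'\<in>cliques_at Sg I delta \<alpha>. c \<subseteq> c' \<longrightarrow> c' = c)
            \<longrightarrow> positive_node Sg I delta \<alpha> c))
  \<and> (\<forall>\<alpha>\<in>X. \<forall>c \<alpha>' c'. dsc_arc Sg I delta \<alpha> c \<alpha>' c' \<and> positive_node Sg I delta \<alpha>' c'
            \<longrightarrow> positive_node Sg I delta \<alpha> c)
  \<and> (\<forall>\<alpha>\<in>X. \<forall>x\<in>Mst Sg delta (Some \<alpha>). \<exists>y\<in>Mst Sg delta (act delta (Some \<alpha>) x).
       height Sg I (x @ y) = height Sg I x \<and>
       (\<forall>i<height Sg I (x @ y).
          positive_node Sg I delta
            (the (act delta (Some \<alpha>) (concat (map cword (take i (nf Sg I (x @ y)))))))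
            (nf Sg I (x @ y) ! i)))
  \<and> (\<forall>\<alpha>\<in>X. \<forall>c. null_node Sg I delta \<alpha> c \<longrightarrow>
       (\<forall>x\<in>Mst Sg delta (Some \<alpha>). nf Sg I x \<noteq> [] \<and> hd (nf Sg I x) = c
            \<longrightarrow> (\<exists>a\<in>Sg. a \<notin> set x)))"
  proof -
  interpret csys Sg I X delta using assms by unfold_locales
  show ?thesis
  proof (intro conjI)
    show "\<forall>\<alpha>\<in>X. Mst Sg delta (Some \<alpha>) \<noteq> {[]} \<longrightarrow>
       (\<forall>c. c \<in> cliques_at Sg I delta \<alpha> \<and> (\<forall>c'\<in>cliques_at Sg I delta \<alpha>. c \<subseteq> c' \<longrightarrow> c' = c)
            \<longrightarrow> positive_node Sg I delta \<alpha> c)"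
      using part1 by blast
    show "\<forall>\<alpha>\<in>X. \<forall>c \<alpha>' c'. dsc_arc Sg I delta \<alpha> c \<alpha>' c' \<and> positive_node Sg I delta \<alpha>' c'
            \<longrightarrow> positive_node Sg I delta \<alpha> c"
      using part2 by blast
    show "\<forall>\<alpha>\<in>X. \<forall>x\<in>Mst Sg delta (Some \<alpha>). \<exists>y\<in>Mst Sg delta (act delta (Some \<alpha>) x).
       height Sg I (x @ y) = height Sg I x \<and>
       (\<forall>i<height Sg I (x @ y).
          positive_node Sg I delta
            (the (act delta (Some \<alpha>) (concat (map cword (take i (nf Sg I (x @ y)))))))
            (nf Sg I (x @ y) ! i))"
      using part3 by blast
    show "\<forall>\<alpha>\<in>X. \<forall>c. null_node Sg I delta \<alpha> c \<longrightarrow>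
       (\<forall>x\<in>Mst Sg delta (Some \<alpha>). nf Sg I x \<noteq> [] \<and> hd (nf Sg I x) = c
            \<longrightarrow> (\<exists>a\<in>Sg. a \<notin> set x))"
      using part4 by blast
  qed
qed

end
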